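(* Let $t>0$ be an integer. There is a constant $C_t$ such that the following holds. Let $G=(V,E,<)$ be an ordered graph with $|V|\ge 2$ that does not contain two $t$-element vertex subsets $S,T$ such that every $s\in S$ and $w\in T$ form a double cherry. Then $|E|\le C_t|V|\log|V|$.
   Context: An ordered graph is a graph with a linear order on its vertices. Two distinct vertices of an ordered graph form a double cherry if either they are adjacent, or they can be named $u,v$ so that there are vertices $u_1,u_2,v_1,v_2$ with $u_1<u<u_2<v_1<v<v_2$ and edges $(u,v_1),(u,v_2),(v,u_1),(v,u_2)$ in the graph. *)

theory Defs
  imports Complex_Main
begin

text \<open>An ordered graph: finite vertex set V of naturals (ordered by the usual order on nat,
  every finite linearly ordered set is order-isomorphic to such a set), and an edge relation E
  which is symmetric, irreflexive and contained in V x V.\<close>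

definition ordered_graph :: "nat set \<Rightarrow> (nat \<Rightarrow> nat \<Rightarrow> bool) \<Rightarrow> bool" where
  "ordered_graph V E \<longleftrightarrow> finite V \<and> (\<forall>u v. E u v \<longrightarrow> u \<in> V \<and> v \<in> V)
     \<and> (\<forall>u v. E u v \<longrightarrow> E v u) \<and> (\<forall>v. \<not> E v v)"

definition edges :: "(nat \<Rightarrow> nat \<Rightarrow> bool) \<Rightarrow> nat set set" where
  "edges E = {{u, v} | u v. E u v}"

definition dc_witness :: "(nat \<Rightarrow> nat \<Rightarrow> bool) \<Rightarrow> nat \<Rightarrow> nat \<Rightarrow> bool" where
  "dc_witness E u v \<longleftrightarrow> (\<exists>u1 u2 v1 v2. u1 < u \<and> u < u2 \<and> u2 < v1 \<and> v1 < v \<and> v < v2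
      \<and> E u v1 \<and> E u v2 \<and> E v u1 \<and> E v u2)"

definition double_cherry :: "(nat \<Rightarrow> nat \<Rightarrow> bool) \<Rightarrow> nat \<Rightarrow> nat \<Rightarrow> bool" where
  "double_cherry E x y \<longleftrightarrow> x \<noteq> y \<and> (E x y \<or> dc_witness E x y \<or> dc_witness E y x)"

end

theory Submission
  imports Defs
begin


definition cvx :: "nat set \<Rightarrow> nat set \<Rightarrow> bool" where
  "cvx X W \<longleftrightarrow> (\<forall>y\<in>X. \<forall>p\<in>W. \<forall>q\<in>W. p \<le> y \<longrightarrow> y \<le> q \<longrightarrow> y \<in> W)"

lemma L2:
  fixes X :: "nat set"
  assumes fin: "finite X" and t: "t \<ge> 1"
  shows "card {W. W \<subseteq> X \<and> card W = t \<and> cvx X W \<and> (\<exists>q\<in>W. q \<le> p) \<and> (\<exists>q\<in>W. p \<le> q)} \<le> t"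
proof -
  let ?F = "{W. W \<subseteq> X \<and> card W = t \<and> cvx X W \<and> (\<exists>q\<in>W. q \<le> p) \<and> (\<exists>q\<in>W. p \<le> q)}"
  let ?M = "{m\<in>X. m \<le> p \<and> card {y\<in>X. m \<le> y \<and> y \<le> p} \<le> t}"
  have basic: "finite W \<and> W \<noteq> {}" if "W \<in> ?F" for W
    using that fin t by (auto intro: finite_subset)
  have inj: "inj_on Min ?F"
  proof (rule inj_onI)
    fix W1 W2 assume W1: "W1 \<in> ?F" and W2: "W2 \<in> ?F" and eq: "Min W1 = Min W2"
    have sub: "A \<subseteq> B" if A: "A \<in> ?F" and B: "B \<in> ?F" and e: "Min A = Min B" and le: "Max A \<le> Max B" for A B
    proof
      fix y assume y: "y \<in> A"
      have fa: "finite A" "A \<noteq> {}" using basic[OF A] by auto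
      have fb: "finite B" "B \<noteq> {}" using basic[OF B] by auto
      have "y \<in> X" using A y by auto
      moreover have "Min B \<le> y" using e Min_le[OF fa(1) y] by simp
      moreover have "y \<le> Max B" using le Max_ge[OF fa(1) y] by simp
      moreover have "Min B \<in> B" "Max B \<in> B" using fb by auto
      moreover have "cvx X B" using B by auto
      ultimately show "y \<in> B" unfolding cvx_def by blast
    qed
    show "W1 = W2"
    proof (cases "Max W1 \<le> Max W2")
      case True
      then have "W1 \<subseteq> W2" using sub[OF W1 W2 eq] by simp
      moreover have "card W1 = card W2" using W1 W2 by simp
      ultimately show ?thesis using basic[OF W2] card_subset_eq by blast
    next
      case False
      then have "W2 \<subseteq> W1" using sub[OF W2 W1 eq[symmetric]] by simp
      moreover have "card W2 = card W1" using W1 W2 by simp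
      ultimately show ?thesis using basic[OF W1] card_subset_eq by metis
    qed
  qed
  have img: "Min ` ?F \<subseteq> ?M"
  proof
    fix m assume "m \<in> Min ` ?F"
    then obtain W where W: "W \<in> ?F" and m: "m = Min W" by auto
    have fw: "finite W" "W \<noteq> {}" using basic[OF W] by auto
    obtain q1 q2 where q1: "q1 \<in> W" "q1 \<le> p" and q2: "q2 \<in> W" "p \<le> q2" using W by auto
    have mW: "m \<in> W" using m fw by auto
    have "m \<le> q1" using m Min_le[OF fw(1) q1(1)] by simp
    have sub: "{y\<in>X. m \<le> y \<and> y \<le> p} \<subseteq> W"
      using W mW q2 unfolding cvx_def by force
    have "card {y\<in>X. m \<le> y \<and> y \<le> p} \<le> card W" by (rule card_mono[OF fw(1) sub])
    then show "m \<in> ?M" using W mW \<open>m \<le> q1\<close> q1 by auto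
  qed
  have cardM: "card ?M \<le> t"
  proof (rule ccontr)
    assume "\<not> card ?M \<le> t"
    then have c: "card ?M > t" by simp
    have fM: "finite ?M" using fin by auto
    have ne: "?M \<noteq> {}" using c by (metis card.empty not_less0)
    define m0 where "m0 = Min ?M"
    have m0: "m0 \<in> ?M" using fM ne m0_def Min_in by blast
    have "?M \<subseteq> {y\<in>X. m0 \<le> y \<and> y \<le> p}" using m0_def fM by auto
    then have "card ?M \<le> card {y\<in>X. m0 \<le> y \<and> y \<le> p}" using fin by (intro card_mono) auto
    with m0 c show False by auto
  qed
  have "card ?F = card (Min ` ?F)" using inj by (simp add: card_image)
  also have "\<dots> \<le> card ?M" using fin by (intro card_mono[OF _ img]) auto
  finally show ?thesis using cardM by simp
qed



lemma L3:
  fixes B :: "nat set" and lo hi :: "nat \<Rightarrow> nat"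
  assumes fin: "finite B" and t: "t \<ge> 1"
  shows "card {W. \<exists>x. W \<subseteq> {b\<in>B. lo b < x \<and> x < hi b} \<and> card W = t \<and> cvx {b\<in>B. lo b < x \<and> x < hi b} W}
          \<le> 2*t*card B"
proof -
  define Act where "Act = (\<lambda>x. {b\<in>B. lo b < x \<and> x < hi b})"
  define P where "P = (\<lambda>W x. W \<subseteq> Act x \<and> card W = t \<and> cvx (Act x) W)"
  define F where "F = (\<lambda>x p. {W. W \<subseteq> Act x \<and> card W = t \<and> cvx (Act x) W \<and> (\<exists>q\<in>W. q \<le> p) \<and> (\<exists>q\<in>W. p \<le> q)})"
  have finA: "finite (Act x)" for x using fin unfolding Act_def by auto
  have cF: "card (F x p) \<le> t" for x p unfolding F_def by (rule L2[OF finA t])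
  have incl: "{W. \<exists>x. P W x} \<subseteq> (\<Union>b\<in>B. F (Suc (lo b)) b) \<union> (\<Union>b\<in>B. F (hi b) b)"
  proof
    fix W assume "W \<in> {W. \<exists>x. P W x}"
    then obtain x where Px: "P W x" by auto
    then obtain x' where Px': "P W x'" and least: "\<And>y. y < x' \<Longrightarrow> \<not> P W y"
      using exists_least_iff[of "P W"] by blast
    have Wne: "W \<noteq> {}" using Px' t unfolding P_def by auto
    have "x' \<noteq> 0"
    proof
      assume "x' = 0"
      then have "Act x' = {}" unfolding Act_def by auto
      then show False using Px' Wne unfolding P_def by auto
    qed
    then obtain z where z: "x' = Suc z" by (cases x') auto
    have nPz: "\<not> P W z" using least z by auto
    show "W \<in> (\<Union>b\<in>B. F (Suc (lo b)) b) \<union> (\<Union>b\<in>B. F (hi b) b)"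
    proof (cases "W \<subseteq> Act z")
      case False
      then obtain w where w: "w \<in> W" "w \<notin> Act z" by auto
      have "w \<in> Act x'" using Px' w unfolding P_def by auto
      then have wB: "w \<in> B" and "lo w < x'" "x' < hi w" unfolding Act_def by auto
      with w(2) z have "lo w = z" unfolding Act_def by auto
      then have "W \<in> F (Suc (lo w)) w" using Px' z w(1) unfolding F_def P_def by auto
      then show ?thesis using wB by auto
    next
      case True
      then have "\<not> cvx (Act z) W" using nPz Px' unfolding P_def by auto
      then obtain y p q where y: "y \<in> Act z" "p \<in> W" "q \<in> W" "p \<le> y" "y \<le> q" "y \<notin> W"
        unfolding cvx_def by blast
      have "y \<notin> Act x'" using Px' y unfolding P_def cvx_def by blast
      with y(1) z have yB: "y \<in> B" and "hi y = x'" unfolding Act_def by auto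
      then have "W \<in> F (hi y) y" using Px' y unfolding F_def P_def by auto
      then show ?thesis using yB by auto
    qed
  qed
  have finU: "finite ((\<Union>b\<in>B. F (Suc (lo b)) b) \<union> (\<Union>b\<in>B. F (hi b) b))"
  proof (rule finite_subset[of _ "Pow B"])
    show "(\<Union>b\<in>B. F (Suc (lo b)) b) \<union> (\<Union>b\<in>B. F (hi b) b) \<subseteq> Pow B"
      unfolding F_def Act_def by auto
  qed (use fin in auto)
  have "card {W. \<exists>x. P W x} \<le> card ((\<Union>b\<in>B. F (Suc (lo b)) b) \<union> (\<Union>b\<in>B. F (hi b) b))"
    by (rule card_mono[OF finU incl])
  also have "\<dots> \<le> card (\<Union>b\<in>B. F (Suc (lo b)) b) + card (\<Union>b\<in>B. F (hi b) b)"
    by (rule card_Un_le)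
  also have "\<dots> \<le> (\<Sum>b\<in>B. card (F (Suc (lo b)) b)) + (\<Sum>b\<in>B. card (F (hi b) b))"
    by (intro add_mono card_UN_le fin)
  also have "\<dots> \<le> (\<Sum>b\<in>B. t) + (\<Sum>b\<in>B. t)"
    by (intro add_mono sum_mono cF)
  also have "\<dots> = 2*t*card B" by simp
  finally show ?thesis unfolding P_def Act_def by simp
qed



lemma ss_le_iff:
  fixes xs :: "nat list"
  assumes s: "sorted_wrt (<) xs" and i: "i < length xs" and j: "j < length xs"
  shows "xs ! i \<le> xs ! j \<longleftrightarrow> i \<le> j"
proof
  assume "xs ! i \<le> xs ! j"
  show "i \<le> j"
  proof (rule ccontr)
    assume "\<not> i \<le> j"
    then have "j < i" by simp
    then have "xs ! j < xs ! i" using sorted_wrt_nth_less[OF s _ i] by blast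
    with \<open>xs ! i \<le> xs ! j\<close> show False by simp
  qed
next
  assume "i \<le> j"
  then show "xs ! i \<le> xs ! j"
    using sorted_wrt_nth_less[OF s _ j, of i] by (cases "i = j") auto
qed

lemma L1:
  fixes X :: "nat set"
  assumes fin: "finite X" and t: "t \<ge> 1"
  shows "card X \<le> (t-1) + card {W. W \<subseteq> X \<and> card W = t \<and> cvx X W}"
proof -
  define xs where "xs = sorted_list_of_set X"
  define L where "L = length xs"
  have s: "sorted_wrt (<) xs" unfolding xs_def by simp
  have d: "distinct xs" unfolding xs_def by simp
  have sx: "set xs = X" unfolding xs_def using fin by simp
  have LX: "L = card X" unfolding L_def xs_def by simp
  let ?Win = "{W. W \<subseteq> X \<and> card W = t \<and> cvx X W}"
  show ?thesis
  proof (cases "L < t")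
    case True then show ?thesis using LX by simp
  next
    case False
    define f where "f = (\<lambda>i. (\<lambda>j. xs ! j) ` {i..<i+t})"
    have fW: "f i \<in> ?Win" if i: "i \<le> L - t" for i
    proof -
      have rng: "j < L" if "j \<in> {i..<i+t}" for j using that i False by auto
      have sub: "f i \<subseteq> X" unfolding f_def using rng sx L_def by auto
      have inj: "inj_on (\<lambda>j. xs ! j) {i..<i+t}"
        using d rng L_def by (auto intro!: inj_onI simp: nth_eq_iff_index_eq)
      have cd: "card (f i) = t" unfolding f_def using card_image[OF inj] by simp
      have cv: "cvx X (f i)"
        unfolding cvx_def
      proof (intro ballI impI)
        fix y p q assume y: "y \<in> X" and p: "p \<in> f i" and q: "q \<in> f i" and py: "p \<le> y" and yq: "y \<le> q"
        obtain k where k: "k < L" "y = xs ! k" using y sx L_def by (metis in_set_conv_nth)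
        obtain jp where jp: "jp \<in> {i..<i+t}" "p = xs ! jp" using p f_def by auto
        obtain jq where jq: "jq \<in> {i..<i+t}" "q = xs ! jq" using q f_def by auto
        have "jp \<le> k" using ss_le_iff[OF s, of jp k] rng[OF jp(1)] k py jp(2) L_def by auto
        moreover have "k \<le> jq" using ss_le_iff[OF s, of k jq] rng[OF jq(1)] k yq jq(2) L_def by auto
        ultimately have "k \<in> {i..<i+t}" using jp(1) jq(1) by auto
        then show "y \<in> f i" unfolding f_def using k by auto
      qed
      show ?thesis using sub cd cv by auto
    qed
    have injf: "inj_on f {0..L-t}"
    proof (rule inj_onI)
      fix i1 i2 assume i1: "i1 \<in> {0..L-t}" and i2: "i2 \<in> {0..L-t}" and e: "f i1 = f i2"
      have m1: "xs ! i1 \<in> f i2" using e t unfolding f_def by auto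
      have m2: "xs ! i2 \<in> f i1" using e t unfolding f_def by auto
      obtain j1 where j1: "j1 \<in> {i2..<i2+t}" "xs ! i1 = xs ! j1" using m1 f_def by auto
      obtain j2 where j2: "j2 \<in> {i1..<i1+t}" "xs ! i2 = xs ! j2" using m2 f_def by auto
      have "i1 = j1" using j1 i1 i2 False d L_def by (auto simp: nth_eq_iff_index_eq)
      moreover have "i2 = j2" using j2 i1 i2 False d L_def by (auto simp: nth_eq_iff_index_eq)
      ultimately show "i1 = i2" using j1 j2 by auto
    qed
    have finW: "finite ?Win" by (rule finite_subset[of _ "Pow X"]) (use fin in auto)
    have "f ` {0..L-t} \<subseteq> ?Win"
    proof (rule image_subsetI)
      fix i assume "i \<in> {0..L-t}"
      then show "f i \<in> ?Win" using fW[of i] by simp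
    qed
    then have "card (f ` {0..L-t}) \<le> card ?Win"
      using finW card_mono by blast
    moreover have "card (f ` {0..L-t}) = L - t + 1" using card_image[OF injf] by simp
    ultimately show ?thesis using LX False by simp
  qed
qed



lemma card_Un5: "card (A \<union> ((B \<union> C) \<union> (D \<union> F))) \<le> card A + (card B + card C + (card D + card F))"
proof -
  have "card (A \<union> ((B \<union> C) \<union> (D \<union> F))) \<le> card A + card ((B \<union> C) \<union> (D \<union> F))" by (rule card_Un_le)
  also have "card ((B \<union> C) \<union> (D \<union> F)) \<le> card (B \<union> C) + card (D \<union> F)" by (rule card_Un_le)
  also have "card (B \<union> C) \<le> card B + card C" by (rule card_Un_le)
  also have "card (D \<union> F) \<le> card D + card F" by (rule card_Un_le)
  finally show ?thesis by simp
qed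

lemma cross_lemma:
  fixes E :: "nat \<Rightarrow> nat \<Rightarrow> bool" and W1 W2 :: "nat set"
  assumes f1: "finite W1" and f2: "finite W2" and t: "t \<ge> 1"
    and sep: "\<forall>a\<in>W1. \<forall>b\<in>W2. a < b"
    and sym: "\<forall>u v. E u v \<longrightarrow> E v u"
    and noK: "\<not> (\<exists>S T. S \<subseteq> W1 \<and> T \<subseteq> W2 \<and> card S = t \<and> card T = t \<and>
                 (\<forall>s\<in>S. \<forall>w\<in>T. double_cherry E s w))"
  shows "card {(a,b). a \<in> W1 \<and> b \<in> W2 \<and> E a b} \<le> (2*t*t+2) * (card W1 + card W2)"
proof -
  define NA where "NA = (\<lambda>b. {a\<in>W1. E a b})"
  define lo where "lo = (\<lambda>b. if NA b = {} then 0 else Min (NA b))"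
  define hi where "hi = (\<lambda>b. if NA b = {} then 0 else Max (NA b))"
  define NB where "NB = (\<lambda>a. {b\<in>W2. E a b})"
  define loB where "loB = (\<lambda>a. if NB a = {} then 0 else Min (NB a))"
  define hiB where "hiB = (\<lambda>a. if NB a = {} then 0 else Max (NB a))"
  define Act where "Act = (\<lambda>x. {b\<in>W2. lo b < x \<and> x < hi b})"
  define Cr where "Cr = (\<lambda>a. {b\<in>Act a. loB a < b \<and> b < hiB a})"
  define Win where "Win = (\<lambda>a. {W. W \<subseteq> Cr a \<and> card W = t \<and> cvx (Cr a) W})"
  define Blocks where "Blocks = {W. \<exists>x. W \<subseteq> Act x \<and> card W = t \<and> cvx (Act x) W}"
  have finNA: "finite (NA b)" for b using f1 unfolding NA_def by auto
  have finNB: "finite (NB a)" for a using f2 unfolding NB_def by auto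
  have finCr: "finite (Cr a)" for a using f2 unfolding Cr_def Act_def by auto
  have dc: "double_cherry E a b" if a: "a \<in> W1" and b: "b \<in> Cr a" for a b
  proof -
    have bW: "b \<in> W2" and l1: "lo b < a" "a < hi b" and l2: "loB a < b" "b < hiB a"
      using b unfolding Cr_def Act_def by auto
    have neA: "NA b \<noteq> {}" using l1 unfolding lo_def hi_def by auto
    have neB: "NB a \<noteq> {}" using l2 unfolding loB_def hiB_def by auto
    have loin: "lo b \<in> NA b" and hiin: "hi b \<in> NA b"
      using neA finNA unfolding lo_def hi_def by auto
    have loBin: "loB a \<in> NB a" and hiBin: "hiB a \<in> NB a"
      using neB finNB unfolding loB_def hiB_def by auto
    have "hi b < loB a" using sep hiin loBin unfolding NA_def NB_def by auto
    moreover have "E a (loB a)" "E a (hiB a)" using loBin hiBin unfolding NB_def by auto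
    moreover have "E b (lo b)" "E b (hi b)" using loin hiin sym unfolding NA_def by auto
    ultimately have "dc_witness E a b" unfolding dc_witness_def using l1 l2 by blast
    moreover have "a \<noteq> b" using sep a bW by fastforce
    ultimately show ?thesis unfolding double_cherry_def by auto
  qed
  have WinB: "Win a \<subseteq> Blocks" for a
  proof
    fix W assume W: "W \<in> Win a"
    have sub: "W \<subseteq> Act a" using W unfolding Win_def Cr_def by auto
    have "cvx (Act a) W" unfolding cvx_def
    proof (intro ballI impI)
      fix y p q assume y: "y \<in> Act a" and p: "p \<in> W" and q: "q \<in> W" and "p \<le> y" "y \<le> q"
      have "p \<in> Cr a" "q \<in> Cr a" using W p q unfolding Win_def by auto
      then have "y \<in> Cr a" using y \<open>p \<le> y\<close> \<open>y \<le> q\<close> unfolding Cr_def by auto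
      then show "y \<in> W" using W p q \<open>p \<le> y\<close> \<open>y \<le> q\<close> unfolding Win_def cvx_def by blast
    qed
    then show "W \<in> Blocks" unfolding Blocks_def using sub W unfolding Win_def by blast
  qed
  have finB: "finite Blocks"
    by (rule finite_subset[of _ "Pow W2"]) (use f2 in \<open>auto simp: Blocks_def Act_def\<close>)
  have cardB: "card Blocks \<le> 2*t*card W2"
    unfolding Blocks_def Act_def by (rule L3[OF f2 t])
  have mult: "card {a\<in>W1. W \<in> Win a} \<le> t - 1" if WB: "W \<in> Blocks" for W
  proof (rule ccontr)
    assume "\<not> ?thesis"
    then have "t \<le> card {a\<in>W1. W \<in> Win a}" by simp
    then obtain S where S: "S \<subseteq> {a\<in>W1. W \<in> Win a}" "card S = t"
      by (meson obtain_subset_with_card_n)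
    have "W \<subseteq> W2" using WB unfolding Blocks_def Act_def by auto
    moreover have "card W = t" using WB unfolding Blocks_def by auto
    moreover have "\<forall>s\<in>S. \<forall>w\<in>W. double_cherry E s w"
    proof (intro ballI)
      fix s w assume s: "s \<in> S" and w: "w \<in> W"
      have "s \<in> W1" "W \<in> Win s" using S(1) s by auto
      then have "w \<in> Cr s" using w unfolding Win_def by auto
      then show "double_cherry E s w" using dc \<open>s \<in> W1\<close> by simp
    qed
    moreover have "S \<subseteq> W1" using S(1) by auto
    ultimately have "\<exists>S T. S \<subseteq> W1 \<and> T \<subseteq> W2 \<and> card S = t \<and> card T = t \<and>
                 (\<forall>s\<in>S. \<forall>w\<in>T. double_cherry E s w)" using S(2) by blast
    then show False using noK by simp
  qed
  have sumWin: "(\<Sum>a\<in>W1. card (Win a)) \<le> (t-1) * card Blocks"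
  proof -
    have "(\<Sum>a\<in>W1. card (Win a)) = (\<Sum>a\<in>W1. \<Sum>W\<in>Blocks. if W \<in> Win a then 1 else 0)"
    proof (rule sum.cong[OF refl])
      fix a assume "a \<in> W1"
      have "Win a = {W\<in>Blocks. W \<in> Win a}" using WinB by auto
      then have "card (Win a) = card {W\<in>Blocks. W \<in> Win a}" by simp
      also have "\<dots> = (\<Sum>W\<in>{W\<in>Blocks. W \<in> Win a}. 1)" by simp
      also have "\<dots> = (\<Sum>W\<in>Blocks. if W \<in> Win a then 1 else 0)"
        by (rule sum.inter_filter[OF finB])
      finally show "card (Win a) = (\<Sum>W\<in>Blocks. if W \<in> Win a then 1 else 0)" .
    qed
    also have "\<dots> = (\<Sum>W\<in>Blocks. \<Sum>a\<in>W1. if W \<in> Win a then 1 else 0)"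
      by (rule sum.swap)
    also have "\<dots> = (\<Sum>W\<in>Blocks. card {a\<in>W1. W \<in> Win a})"
    proof (rule sum.cong[OF refl])
      fix W
      have "(\<Sum>a\<in>W1. if W \<in> Win a then 1 else 0) = (\<Sum>a\<in>{a\<in>W1. W \<in> Win a}. 1::nat)"
        by (rule sum.inter_filter[OF f1, symmetric])
      then show "(\<Sum>a\<in>W1. if W \<in> Win a then 1 else 0) = card {a\<in>W1. W \<in> Win a}" by simp
    qed
    also have "\<dots> \<le> (\<Sum>W\<in>Blocks. t - 1)"
      by (rule sum_mono) (use mult in auto)
    finally show ?thesis by (simp add: mult.commute)
  qed
  have crossbound: "card (SIGMA a:W1. Cr a) \<le> (t-1) * card W1 + (t-1) * (2*t*card W2)"
  proof -
    have "card (SIGMA a:W1. Cr a) = (\<Sum>a\<in>W1. card (Cr a))"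
      using f1 finCr by simp
    also have "\<dots> \<le> (\<Sum>a\<in>W1. (t-1) + card (Win a))"
      by (rule sum_mono) (unfold Win_def, rule L1[OF finCr t])
    also have "\<dots> = (t-1) * card W1 + (\<Sum>a\<in>W1. card (Win a))"
      by (simp add: sum.distrib)
    also have "\<dots> \<le> (t-1) * card W1 + (t-1) * card Blocks" using sumWin by simp
    also have "\<dots> \<le> (t-1) * card W1 + (t-1) * (2*t*card W2)" using cardB by simp
    finally show ?thesis .
  qed
  have incl: "{(a,b). a \<in> W1 \<and> b \<in> W2 \<and> E a b} \<subseteq>
      (SIGMA a:W1. Cr a) \<union> (((\<lambda>a. (a, loB a)) ` W1 \<union> (\<lambda>a. (a, hiB a)) ` W1) \<union>
      ((\<lambda>b. (lo b, b)) ` W2 \<union> (\<lambda>b. (hi b, b)) ` W2))"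
  proof
    fix x assume "x \<in> {(a,b). a \<in> W1 \<and> b \<in> W2 \<and> E a b}"
    then obtain a b where x: "x = (a,b)" and a: "a \<in> W1" and b: "b \<in> W2" and e: "E a b" by auto
    have aNA: "a \<in> NA b" using a e unfolding NA_def by auto
    have bNB: "b \<in> NB a" using b e unfolding NB_def by auto
    have "lo b \<le> a" "a \<le> hi b" using aNA finNA unfolding lo_def hi_def by auto
    moreover have "loB a \<le> b" "b \<le> hiB a" using bNB finNB unfolding loB_def hiB_def by auto
    ultimately consider "lo b < a \<and> a < hi b \<and> loB a < b \<and> b < hiB a" | "a = lo b" | "a = hi b"
      | "b = loB a" | "b = hiB a" by linarith
    then show "x \<in> (SIGMA a:W1. Cr a) \<union> (((\<lambda>a. (a, loB a)) ` W1 \<union> (\<lambda>a. (a, hiB a)) ` W1) \<union>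
      ((\<lambda>b. (lo b, b)) ` W2 \<union> (\<lambda>b. (hi b, b)) ` W2))"
    proof cases
      case 1 then show ?thesis using x a b unfolding Cr_def Act_def by auto
    qed (use x a b in auto)
  qed
  have "card {(a,b). a \<in> W1 \<and> b \<in> W2 \<and> E a b} \<le> card ((SIGMA a:W1. Cr a) \<union> (((\<lambda>a. (a, loB a)) ` W1 \<union> (\<lambda>a. (a, hiB a)) ` W1) \<union>
      ((\<lambda>b. (lo b, b)) ` W2 \<union> (\<lambda>b. (hi b, b)) ` W2)))"
    by (rule card_mono[OF _ incl]) (use f1 f2 finCr in auto)
  also have "\<dots> \<le> card (SIGMA a:W1. Cr a) + (card ((\<lambda>a. (a, loB a)) ` W1) + card ((\<lambda>a. (a, hiB a)) ` W1)
      + (card ((\<lambda>b. (lo b, b)) ` W2) + card ((\<lambda>b. (hi b, b)) ` W2)))"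
    by (rule card_Un5)
  also have "\<dots> \<le> card (SIGMA a:W1. Cr a) + (card W1 + card W1 + (card W2 + card W2))"
    by (intro add_mono card_image_le f1 f2 order_refl)
  also have "\<dots> \<le> (t-1) * card W1 + (t-1) * (2*t*card W2) + (2*card W1 + 2*card W2)"
    using crossbound by simp
  also have "\<dots> \<le> (2*t*t+2) * (card W1 + card W2)"
  proof -
    have a1: "(t-1) * card W1 + 2*card W1 \<le> (2*t*t+2) * card W1"
    proof -
      have "t \<le> t * t" using t by simp
      then have "t - 1 + 2 \<le> 2*t*t+2" by linarith
      then have "(t-1+2) * card W1 \<le> (2*t*t+2) * card W1" by (rule mult_right_mono) simp
      then show ?thesis by (simp add: add_mult_distrib)
    qed
    have a2: "(t-1) * (2*t*card W2) + 2*card W2 \<le> (2*t*t+2) * card W2"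
    proof -
      have "(t-1)*(2*t) + 2 \<le> 2*t*t+2" by (simp add: mult_le_mono1)
      then have "((t-1)*(2*t) + 2) * card W2 \<le> (2*t*t+2) * card W2" by (rule mult_right_mono) simp
      then show ?thesis by (simp add: add_mult_distrib mult.assoc)
    qed
    have "(t-1) * card W1 + (t-1) * (2*t*card W2) + (2*card W1 + 2*card W2) =
        ((t-1) * card W1 + 2*card W1) + ((t-1) * (2*t*card W2) + 2*card W2)" by linarith
    also have "\<dots> \<le> (2*t*t+2) * card W1 + (2*t*t+2) * card W2" by (rule add_mono[OF a1 a2])
    also have "\<dots> = (2*t*t+2) * (card W1 + card W2)" by (rule add_mult_distrib2[symmetric])
    finally show ?thesis .
  qed
  finally show ?thesis .
qed



lemma card_Un3: "card C \<le> c \<Longrightarrow> card ((A \<union> B) \<union> C) \<le> card A + card B + c"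
proof -
  assume h: "card C \<le> c"
  have "card ((A \<union> B) \<union> C) \<le> card (A \<union> B) + card C" by (rule card_Un_le)
  also have "card (A \<union> B) \<le> card A + card B" by (rule card_Un_le)
  finally show ?thesis using h by simp
qed

lemma main_ind:
  fixes E :: "nat \<Rightarrow> nat \<Rightarrow> bool"
  assumes og: "ordered_graph V E" and t: "t \<ge> 1"
  and noK: "\<not> (\<exists>S T. S \<subseteq> V \<and> T \<subseteq> V \<and> card S = t \<and> card T = t \<and>
                 (\<forall>s\<in>S. \<forall>w\<in>T. double_cherry E s w))"
  shows "\<forall>W. W \<subseteq> V \<longrightarrow> card W \<le> 2^k \<longrightarrow> card {e \<in> edges E. e \<subseteq> W} \<le> (2*t*t+2) * card W * k"
proof (induction k)
  have finV: "finite V" and irr: "\<forall>v. \<not> E v v" using og unfolding ordered_graph_def by auto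
  case 0
  show ?case
  proof (intro allI impI)
    fix W assume W: "W \<subseteq> V" "card W \<le> 2^0"
    have "{e \<in> edges E. e \<subseteq> W} = {}"
    proof (rule ccontr)
      assume "{e \<in> edges E. e \<subseteq> W} \<noteq> {}"
      then obtain u v where uv: "E u v" "{u,v} \<subseteq> W" unfolding edges_def by auto
      have "u \<noteq> v" using uv irr by auto
      then have "card {u,v} = 2" by simp
      moreover have "card {u,v} \<le> card W" using uv W finV by (intro card_mono) (auto intro: finite_subset)
      ultimately show False using W by simp
    qed
    then show "card {e \<in> edges E. e \<subseteq> W} \<le> (2*t*t+2) * card W * 0" by (simp only: card.empty mult_0_right le0)
  qed
next
  have finV: "finite V" and sym: "\<forall>u v. E u v \<longrightarrow> E v u" using og unfolding ordered_graph_def by auto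
  let ?K = "2*t*t+2"
  case (Suc k)
  show ?case
  proof (intro allI impI)
    fix W assume WV: "W \<subseteq> V" and cW: "card W \<le> 2^Suc k"
    have finW: "finite W" using WV finV by (rule finite_subset)
    define xs where "xs = sorted_list_of_set W"
    define h where "h = length xs div 2"
    define W1 where "W1 = set (take h xs)"
    define W2 where "W2 = set (drop h xs)"
    have s: "sorted_wrt (<) xs" and d: "distinct xs" and sx: "set xs = W" and lx: "length xs = card W"
      unfolding xs_def using finW by auto
    have WU: "W = W1 \<union> W2" unfolding W1_def W2_def using sx
      by (metis append_take_drop_id set_append)
    have sep: "\<forall>a\<in>W1. \<forall>b\<in>W2. a < b"
      using s unfolding W1_def W2_def by (metis append_take_drop_id sorted_wrt_append)
    have c1: "card W1 = h" unfolding W1_def h_def using d by (simp add: distinct_card)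
    have c2: "card W2 = length xs - h" unfolding W2_def h_def using d by (simp add: distinct_card)
    have csum: "card W1 + card W2 = card W" using c1 c2 lx h_def by simp
    have b1: "card W1 \<le> 2^k" using c1 h_def lx cW by simp
    have b2: "card W2 \<le> 2^k" using c2 h_def lx cW by simp
    have W1V: "W1 \<subseteq> V" and W2V: "W2 \<subseteq> V" using WU WV by auto
    have f1: "finite W1" and f2: "finite W2" unfolding W1_def W2_def by auto
    let ?P = "{(a,b). a \<in> W1 \<and> b \<in> W2 \<and> E a b}"
    have noK': "\<not> (\<exists>S T. S \<subseteq> W1 \<and> T \<subseteq> W2 \<and> card S = t \<and> card T = t \<and>
                 (\<forall>s\<in>S. \<forall>w\<in>T. double_cherry E s w))"
    proof
      assume "\<exists>S T. S \<subseteq> W1 \<and> T \<subseteq> W2 \<and> card S = t \<and> card T = t \<and>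
                 (\<forall>s\<in>S. \<forall>w\<in>T. double_cherry E s w)"
      then obtain S T where ST: "S \<subseteq> W1" "T \<subseteq> W2" "card S = t" "card T = t"
        "\<forall>s\<in>S. \<forall>w\<in>T. double_cherry E s w" by blast
      have "S \<subseteq> V" "T \<subseteq> V" using ST(1,2) W1V W2V by auto
      then show False using noK ST(3-5) by blast
    qed
    have cross: "card ?P \<le> ?K * (card W1 + card W2)"
      by (rule cross_lemma[OF f1 f2 t sep sym noK'])
    have incl: "{e \<in> edges E. e \<subseteq> W} \<subseteq> ({e \<in> edges E. e \<subseteq> W1} \<union> {e \<in> edges E. e \<subseteq> W2})
        \<union> (\<lambda>(a,b). {a,b}) ` ?P"
    proof
      fix e assume e: "e \<in> {e \<in> edges E. e \<subseteq> W}"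
      then obtain u v where uv: "e = {u,v}" "E u v" "u \<in> W" "v \<in> W" unfolding edges_def by auto
      have ee: "e \<in> edges E" using e by auto
      consider "u \<in> W1" "v \<in> W1" | "u \<in> W2" "v \<in> W2" | "u \<in> W1" "v \<in> W2" | "u \<in> W2" "v \<in> W1"
        using uv WU by blast
      then show "e \<in> ({e \<in> edges E. e \<subseteq> W1} \<union> {e \<in> edges E. e \<subseteq> W2}) \<union> (\<lambda>(a,b). {a,b}) ` ?P"
      proof cases
        case 1 then show ?thesis using ee uv by auto
      next
        case 2 then show ?thesis using ee uv by auto
      next
        case 3
        then have "(u,v) \<in> ?P" using uv by auto
        then show ?thesis using uv by force
      next
        case 4
        then have "(v,u) \<in> ?P" using uv sym by auto
        moreover have "e = (\<lambda>(a,b). {a,b}) (v,u)" using uv by auto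
        ultimately show ?thesis by blast
      qed
    qed
    have finEW: "finite {e \<in> edges E. e \<subseteq> W1}" "finite {e \<in> edges E. e \<subseteq> W2}"
      using f1 f2 by (auto intro: finite_subset[of _ "Pow W1"] finite_subset[of _ "Pow W2"])
    have finP: "finite ?P" by (rule finite_subset[of _ "W1 \<times> W2"]) (use f1 f2 in auto)
    have "card {e \<in> edges E. e \<subseteq> W} \<le> card (({e \<in> edges E. e \<subseteq> W1} \<union> {e \<in> edges E. e \<subseteq> W2})
        \<union> (\<lambda>(a,b). {a,b}) ` ?P)"
      by (rule card_mono[OF _ incl]) (use finEW finP in auto)
    also have "\<dots> \<le> card {e \<in> edges E. e \<subseteq> W1} + card {e \<in> edges E. e \<subseteq> W2} + card ?P"
      by (rule card_Un3[OF card_image_le[OF finP]])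
    also have "\<dots> \<le> ?K * card W1 * k + ?K * card W2 * k + ?K * (card W1 + card W2)"
      using Suc.IH W1V W2V b1 b2 cross by (intro add_mono) auto
    also have "\<dots> = ?K * (card W1 + card W2) * Suc k" by (simp add: algebra_simps)
    also have "\<dots> = ?K * card W * Suc k" using csum by simp
    finally show "card {e \<in> edges E. e \<subseteq> W} \<le> ?K * card W * Suc k" .
  qed
qed



theorem corollary3p3:
  fixes t :: nat
  assumes "t > 0"
  shows "\<exists>C::real. \<forall>V E. ordered_graph V E \<and> card V \<ge> 2 \<and>
           \<not> (\<exists>S T. S \<subseteq> V \<and> T \<subseteq> V \<and> card S = t \<and> card T = t \<and>
                 (\<forall>s\<in>S. \<forall>w\<in>T. double_cherry E s w))
         \<longrightarrow> real (card (edges E)) \<le> C * real (card V) * ln (real (card V))"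
proof -
  define K where "K = 2*t*t+2"
  have t: "t \<ge> 1" using assms by simp
  show ?thesis
  proof (rule exI[of _ "2 * real K / ln 2"], intro allI impI)
    fix V and E :: "nat \<Rightarrow> nat \<Rightarrow> bool"
    assume H: "ordered_graph V E \<and> card V \<ge> 2 \<and>
           \<not> (\<exists>S T. S \<subseteq> V \<and> T \<subseteq> V \<and> card S = t \<and> card T = t \<and>
                 (\<forall>s\<in>S. \<forall>w\<in>T. double_cherry E s w))"
    then have og: "ordered_graph V E" and n2: "card V \<ge> 2" by auto
    define n where "n = card V"
    define k where "k = (LEAST k. n \<le> 2^k)"
    have ex: "n \<le> 2^n" using less_exp[of n] by simp
    have kprop: "n \<le> 2^k" unfolding k_def by (rule LeastI[of "\<lambda>k. n \<le> 2^k" n, OF ex])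
    have k1: "k \<ge> 1"
    proof (rule ccontr)
      assume "\<not> k \<ge> 1" then have "k = 0" by simp
      then show False using kprop n2 n_def by simp
    qed
    have kless: "\<not> n \<le> 2^(k-1)" unfolding k_def
      by (rule not_less_Least) (use k1 k_def in simp)
    have alle: "edges E = {e \<in> edges E. e \<subseteq> V}" using og unfolding ordered_graph_def edges_def by auto
    have "card {e \<in> edges E. e \<subseteq> V} \<le> K * card V * k"
      using main_ind[OF og t, of k] H kprop n_def K_def by auto
    then have bnd: "real (card (edges E)) \<le> real K * real n * real k"
      using alle n_def by (metis of_nat_le_iff of_nat_mult)
    have npos: "real n \<ge> 2" using n2 n_def by simp
    have l2: "ln 2 > (0::real)" by simp
    have "real (2^(k-1)) < real n" using kless by simp
    then have "ln (real (2^(k-1))) < ln (real n)" by (subst ln_less_cancel_iff) auto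
    then have a: "real (k-1) * ln 2 < ln (real n)" by (simp add: ln_realpow)
    have b: "ln 2 \<le> ln (real n)" using npos by simp
    have "real k * ln 2 = real (k-1) * ln 2 + ln 2" using k1 by (simp add: of_nat_diff algebra_simps)
    also have "\<dots> \<le> 2 * ln (real n)" using a b by linarith
    finally have kb: "real k \<le> 2 * ln (real n) / ln 2" using l2 by (simp add: field_simps)
    have "real K * real n * real k \<le> real K * real n * (2 * ln (real n) / ln 2)"
      using kb npos by (intro mult_left_mono) auto
    also have "\<dots> = 2 * real K / ln 2 * real n * ln (real n)" by simp
    finally show "real (card (edges E)) \<le> 2 * real K / ln 2 * real (card V) * ln (real (card V))"
      using bnd n_def by simp
  qed
qed


end
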